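(* For every $k\in\mathbb{N}$ there exists an instance $\mathcal{I}$ of the Strip Packing Problem in which all rectangles are squares, together with an initial ordering of its squares, such that the bottom-left $k$-local search algorithm started from this ordering returns a packing of height $h_{\text{$k$-BL}}(\mathcal{I}) = 2\cdot h_{\text{OPT}}(\mathcal{I})$.
   Context: Strip Packing Problem: given a strip width $W>0$ and rectangles $r_1,\dots,r_n$ with widths $w_i\le W$ and heights $h_i$, a packing assigns to each $r_i$ a lower-left corner $(x_i,y_i)$; it is feasible if $x_i\ge 0$, $x_i+w_i\le W$, $y_i\ge 0$ and the open rectangles $(x_i,x_i+w_i)\times(y_i,y_i+h_i)$ are pairwise disjoint; no rotations. The height of a packing is $\max_i(y_i+h_i)$ and $h_{\text{OPT}}(\mathcal{I})$ is the minimum height of a feasible packing. Bottom-left algorithm: given an ordering, place the first rectangle at $(0,0)$ and then each subsequent rectangle at a feasible position $(x,y)$ (feasible together with those already placed) with $(y,x)$ lexicographically minimal. Bottom-left $k$-local search algorithm: start with an initial ordering and its bottom-left packing. In each iteration (improvement step), look for a new ordering obtained from the current one by permuting at most $k$ rectangles in the ordering such that the bottom-left packing of the new ordering has strictly smaller height; if one exists, replace the current ordering by it. Stop when no such improvement exists (a local optimum). $h_{\text{$k$-BL}}(\mathcal{I})$ denotes the height of the returned packing. *)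

theory Defs
  imports Main Complex_Main
begin

text \<open>An instance: strip width W, n rectangles indexed 0..<n with widths w i and heights h i.
  A placement assigns lower-left corners (x i, y i).\<close>

definition open_rect :: "real \<Rightarrow> real \<Rightarrow> real \<Rightarrow> real \<Rightarrow> (real \<times> real) set" where
  "open_rect a b wd ht = {(p, q). a < p \<and> p < a + wd \<and> b < q \<and> q < b + ht}"

definition feasible_pos ::
  "real \<Rightarrow> (nat \<Rightarrow> real) \<Rightarrow> (nat \<Rightarrow> real) \<Rightarrow> nat set \<Rightarrow> (nat \<Rightarrow> real) \<Rightarrow> (nat \<Rightarrow> real)
     \<Rightarrow> nat \<Rightarrow> real \<Rightarrow> real \<Rightarrow> bool" where
  "feasible_pos W w h S x y r a b \<longleftrightarrow>
     0 \<le> a \<and> a + w r \<le> W \<and> 0 \<le> b \<and>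
     (\<forall>i\<in>S. open_rect a b (w r) (h r) \<inter> open_rect (x i) (y i) (w i) (h i) = {})"

definition feasible_packing ::
  "real \<Rightarrow> nat \<Rightarrow> (nat \<Rightarrow> real) \<Rightarrow> (nat \<Rightarrow> real) \<Rightarrow> (nat \<Rightarrow> real) \<Rightarrow> (nat \<Rightarrow> real) \<Rightarrow> bool" where
  "feasible_packing W n w h x y \<longleftrightarrow>
     (\<forall>i<n. 0 \<le> x i \<and> x i + w i \<le> W \<and> 0 \<le> y i) \<and>
     (\<forall>i<n. \<forall>j<n. i \<noteq> j \<longrightarrow>
        open_rect (x i) (y i) (w i) (h i) \<inter> open_rect (x j) (y j) (w j) (h j) = {})"

definition packing_height :: "nat \<Rightarrow> (nat \<Rightarrow> real) \<Rightarrow> (nat \<Rightarrow> real) \<Rightarrow> real" where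
  "packing_height n h y = Max ((\<lambda>i. y i + h i) ` {..<n})"

definition h_opt :: "real \<Rightarrow> nat \<Rightarrow> (nat \<Rightarrow> real) \<Rightarrow> (nat \<Rightarrow> real) \<Rightarrow> real" where
  "h_opt W n w h = Inf {packing_height n h y | x y. feasible_packing W n w h x y}"

definition is_ordering :: "nat \<Rightarrow> nat list \<Rightarrow> bool" where
  "is_ordering n \<sigma> \<longleftrightarrow> distinct \<sigma> \<and> set \<sigma> = {..<n}"

definition is_BL_packing ::
  "real \<Rightarrow> (nat \<Rightarrow> real) \<Rightarrow> (nat \<Rightarrow> real) \<Rightarrow> nat list \<Rightarrow> (nat \<Rightarrow> real) \<Rightarrow> (nat \<Rightarrow> real) \<Rightarrow> bool" where
  "is_BL_packing W w h \<sigma> x y \<longleftrightarrow>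
     (\<forall>j<length \<sigma>. let r = \<sigma> ! j; S = set (take j \<sigma>) in
        feasible_pos W w h S x y r (x r) (y r) \<and>
        (\<forall>a b. feasible_pos W w h S x y r a b \<longrightarrow> y r < b \<or> (y r = b \<and> x r \<le> a)))"

definition BL_height ::
  "real \<Rightarrow> nat \<Rightarrow> (nat \<Rightarrow> real) \<Rightarrow> (nat \<Rightarrow> real) \<Rightarrow> nat list \<Rightarrow> real" where
  "BL_height W n w h \<sigma> =
     (THE H. \<exists>x y. is_BL_packing W w h \<sigma> x y \<and> H = packing_height n h y)"

definition k_perm :: "nat \<Rightarrow> nat \<Rightarrow> nat list \<Rightarrow> nat list \<Rightarrow> bool" where
  "k_perm n k \<sigma> \<sigma>' \<longleftrightarrow> is_ordering n \<sigma>' \<and> length \<sigma>' = length \<sigma> \<and>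
     card {i. i < length \<sigma> \<and> \<sigma> ! i \<noteq> \<sigma>' ! i} \<le> k"

definition improvement_step ::
  "real \<Rightarrow> nat \<Rightarrow> (nat \<Rightarrow> real) \<Rightarrow> (nat \<Rightarrow> real) \<Rightarrow> nat \<Rightarrow> nat list \<Rightarrow> nat list \<Rightarrow> bool" where
  "improvement_step W n w h k \<sigma> \<sigma>' \<longleftrightarrow>
     k_perm n k \<sigma> \<sigma>' \<and> BL_height W n w h \<sigma>' < BL_height W n w h \<sigma>"

definition local_optimum ::
  "real \<Rightarrow> nat \<Rightarrow> (nat \<Rightarrow> real) \<Rightarrow> (nat \<Rightarrow> real) \<Rightarrow> nat \<Rightarrow> nat list \<Rightarrow> bool" where
  "local_optimum W n w h k \<sigma> \<longleftrightarrow> \<not> (\<exists>\<sigma>'. improvement_step W n w h k \<sigma> \<sigma>')"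

end

theory Submission
  imports Defs
begin

lemma rect_disj_iff:
  assumes "0<w1" "0<h1" "0<w2" "0<h2"
  shows "open_rect a1 b1 w1 h1 \<inter> open_rect a2 b2 w2 h2 = {} \<longleftrightarrow>
         (a1+w1 \<le> a2 \<or> a2+w2 \<le> a1 \<or> b1+h1 \<le> b2 \<or> b2+h2 \<le> b1)"
proof
  assume D: "open_rect a1 b1 w1 h1 \<inter> open_rect a2 b2 w2 h2 = {}"
  show "a1+w1 \<le> a2 \<or> a2+w2 \<le> a1 \<or> b1+h1 \<le> b2 \<or> b2+h2 \<le> b1"
  proof (rule ccontr)
    assume "\<not> ?thesis"
    hence H: "a2 < a1+w1" "a1 < a2+w2" "b2 < b1+h1" "b1 < b2+h2" by auto
    define p where "p = (max a1 a2 + min (a1+w1) (a2+w2))/2"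
    define q where "q = (max b1 b2 + min (b1+h1) (b2+h2))/2"
    have "(p,q) \<in> open_rect a1 b1 w1 h1" "(p,q) \<in> open_rect a2 b2 w2 h2"
      using H assms unfolding p_def q_def open_rect_def by (auto simp: max_def min_def)
    thus False using D by blast
  qed
next
  assume "a1+w1 \<le> a2 \<or> a2+w2 \<le> a1 \<or> b1+h1 \<le> b2 \<or> b2+h2 \<le> b1"
  thus "open_rect a1 b1 w1 h1 \<inter> open_rect a2 b2 w2 h2 = {}"
    unfolding open_rect_def by auto
qed

lemma feasible_pos_cong:
  "(\<forall>i\<in>S. x i = x' i \<and> y i = y' i) \<Longrightarrow>
   feasible_pos W w h S x y r a b = feasible_pos W w h S x' y' r a b"
  unfolding feasible_pos_def by auto

lemma lexmin_exists:
  assumes fin: "finite S" and pos: "\<forall>i. 0 < w i \<and> 0 < h i" and wr: "w r \<le> W"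
  shows "\<exists>a b. feasible_pos W w h S x y r a b \<and>
           (\<forall>a' b'. feasible_pos W w h S x y r a' b' \<longrightarrow> b < b' \<or> (b = b' \<and> a \<le> a'))"
proof -
  define Xs where "Xs = insert 0 ((\<lambda>i. x i + w i) ` S)"
  define Ys where "Ys = insert 0 ((\<lambda>i. y i + h i) ` S)"
  define C where "C = {p \<in> Xs \<times> Ys. feasible_pos W w h S x y r (fst p) (snd p)}"
  have finX: "finite Xs" and finY: "finite Ys" using fin by (auto simp: Xs_def Ys_def)
  have finC: "finite C" unfolding C_def using finX finY
    by (metis (no_types, lifting) finite_SigmaI finite_subset mem_Collect_eq subsetI)
  have slide: "\<exists>p\<in>C. fst p \<le> a \<and> snd p \<le> b" if F: "feasible_pos W w h S x y r a b" for a b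
  proof -
    have a0: "0 \<le> a" and b0: "0 \<le> b" and aw: "a + w r \<le> W" using F unfolding feasible_pos_def by auto
    define a' where "a' = Max {t\<in>Xs. t \<le> a}"
    define b' where "b' = Max {t\<in>Ys. t \<le> b}"
    have fa: "finite {t\<in>Xs. t \<le> a}" using finX by auto
    have fb: "finite {t\<in>Ys. t \<le> b}" using finY by auto
    have na: "0 \<in> {t\<in>Xs. t \<le> a}" using a0 by (auto simp: Xs_def)
    have nb: "0 \<in> {t\<in>Ys. t \<le> b}" using b0 by (auto simp: Ys_def)
    have a'X: "a' \<in> Xs" "a' \<le> a" using Max_in[OF fa] na unfolding a'_def by auto
    have b'Y: "b' \<in> Ys" "b' \<le> b" using Max_in[OF fb] nb unfolding b'_def by auto
    have a'ge: "t \<le> a'" if "t \<in> Xs" "t \<le> a" for t using Max_ge[OF fa] that unfolding a'_def by auto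
    have b'ge: "t \<le> b'" if "t \<in> Ys" "t \<le> b" for t using Max_ge[OF fb] that unfolding b'_def by auto
    have "feasible_pos W w h S x y r a' b'"
      unfolding feasible_pos_def
    proof (intro conjI ballI)
      show "0 \<le> a'" using a'ge[of 0] a0 by (auto simp: Xs_def)
      show "a' + w r \<le> W" using a'X aw by auto
      show "0 \<le> b'" using b'ge[of 0] b0 by (auto simp: Ys_def)
      fix i assume i: "i \<in> S"
      have "open_rect a b (w r) (h r) \<inter> open_rect (x i) (y i) (w i) (h i) = {}"
        using F i unfolding feasible_pos_def by auto
      hence c: "a + w r \<le> x i \<or> x i + w i \<le> a \<or> b + h r \<le> y i \<or> y i + h i \<le> b"
        using rect_disj_iff pos by blast
      have "x i + w i \<in> Xs" "y i + h i \<in> Ys" using i by (auto simp: Xs_def Ys_def)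
      hence "a' + w r \<le> x i \<or> x i + w i \<le> a' \<or> b' + h r \<le> y i \<or> y i + h i \<le> b'"
        using c a'X b'Y a'ge b'ge by force
      thus "open_rect a' b' (w r) (h r) \<inter> open_rect (x i) (y i) (w i) (h i) = {}"
        using rect_disj_iff pos by blast
    qed
    hence "(a',b') \<in> C" using a'X b'Y by (auto simp: C_def)
    thus ?thesis using a'X b'Y by force
  qed
  define B where "B = Max Ys"
  have BY: "\<And>t. t \<in> Ys \<Longrightarrow> t \<le> B" using finY by (simp add: B_def)
  have "B \<in> Ys" unfolding B_def by (rule Max_in[OF finY]) (simp add: Ys_def)
  have "feasible_pos W w h S x y r 0 B"
    unfolding feasible_pos_def
  proof (intro conjI ballI)
    show "0 \<le> (0::real)" by simp
    show "0 + w r \<le> W" using wr by simp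
    show "0 \<le> B" using BY[of 0] by (simp add: Ys_def)
    fix i assume "i \<in> S"
    hence "y i + h i \<le> B" using BY by (auto simp: Ys_def)
    thus "open_rect 0 B (w r) (h r) \<inter> open_rect (x i) (y i) (w i) (h i) = {}"
      using rect_disj_iff pos by blast
  qed
  hence "(0,B) \<in> C" using \<open>B \<in> Ys\<close> by (auto simp: C_def Xs_def)
  hence Cne: "C \<noteq> {}" by auto
  define b0 where "b0 = Min (snd ` C)"
  have b0in: "b0 \<in> snd ` C" using finC Cne by (simp add: b0_def)
  have b0le: "\<And>p. p \<in> C \<Longrightarrow> b0 \<le> snd p" using finC by (simp add: b0_def)
  define C0 where "C0 = {p\<in>C. snd p = b0}"
  have finC0: "finite C0" using finC by (simp add: C0_def)
  have C0ne: "C0 \<noteq> {}" using b0in by (auto simp: C0_def)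
  define a0 where "a0 = Min (fst ` C0)"
  have a0in: "a0 \<in> fst ` C0" using finC0 C0ne by (simp add: a0_def)
  have a0le: "\<And>p. p \<in> C0 \<Longrightarrow> a0 \<le> fst p" using finC0 by (simp add: a0_def)
  have "(a0,b0) \<in> C" using a0in by (auto simp: C0_def)
  hence F0: "feasible_pos W w h S x y r a0 b0" by (auto simp: C_def)
  show ?thesis
  proof (intro exI conjI allI impI)
    show "feasible_pos W w h S x y r a0 b0" by (rule F0)
    fix a' b' assume "feasible_pos W w h S x y r a' b'"
    then obtain p where p: "p \<in> C" "fst p \<le> a'" "snd p \<le> b'" using slide by blast
    show "b0 < b' \<or> (b0 = b' \<and> a0 \<le> a')"
    proof (cases "b0 < b'")
      case False
      hence "snd p = b0" using b0le[OF p(1)] p(3) by auto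
      hence "p \<in> C0" using p by (simp add: C0_def)
      hence "a0 \<le> fst p" by (rule a0le)
      thus ?thesis using p False b0le[OF p(1)] by linarith
    qed simp
  qed
qed

lemma feasible_pos_cong2:
  "(\<forall>i\<in>S. x i = x' i \<and> y i = y' i) \<Longrightarrow>
   feasible_pos W w h S x y = feasible_pos W w h S x' y'"
  unfolding feasible_pos_def by (intro ext) auto

lemma BL_snoc:
  assumes BL: "is_BL_packing W w h \<sigma> x y" and r: "r \<notin> set \<sigma>"
    and F: "feasible_pos W w h (set \<sigma>) x y r a b"
    and Mn: "\<forall>a' b'. feasible_pos W w h (set \<sigma>) x y r a' b' \<longrightarrow> b < b' \<or> (b = b' \<and> a \<le> a')"
  shows "is_BL_packing W w h (\<sigma>@[r]) (x(r:=a)) (y(r:=b))"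
  unfolding is_BL_packing_def Let_def
proof (intro allI impI)
  fix j assume j: "j < length (\<sigma>@[r])"
  have agree: "\<forall>i\<in>set \<sigma>. (x(r:=a)) i = x i \<and> (y(r:=b)) i = y i" using r by auto
  show "feasible_pos W w h (set (take j (\<sigma> @ [r]))) (x(r := a)) (y(r := b)) ((\<sigma> @ [r]) ! j)
           ((x(r := a)) ((\<sigma> @ [r]) ! j)) ((y(r := b)) ((\<sigma> @ [r]) ! j)) \<and>
        (\<forall>a' b'. feasible_pos W w h (set (take j (\<sigma> @ [r]))) (x(r := a)) (y(r := b)) ((\<sigma> @ [r]) ! j) a' b' \<longrightarrow>
            (y(r := b)) ((\<sigma> @ [r]) ! j) < b' \<or> (y(r := b)) ((\<sigma> @ [r]) ! j) = b' \<and> (x(r := a)) ((\<sigma> @ [r]) ! j) \<le> a')"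
  proof (cases "j < length \<sigma>")
    case True
    have e: "(\<sigma>@[r])!j = \<sigma>!j" "take j (\<sigma>@[r]) = take j \<sigma>" using True by (auto simp: nth_append)
    have ne: "\<sigma>!j \<noteq> r" using True r nth_mem by metis
    have sub: "set (take j \<sigma>) \<subseteq> set \<sigma>" by (rule set_take_subset)
    have c: "feasible_pos W w h (set (take j \<sigma>)) (x(r:=a)) (y(r:=b)) = feasible_pos W w h (set (take j \<sigma>)) x y"
      using agree sub by (intro feasible_pos_cong2) blast
    have P: "feasible_pos W w h (set (take j \<sigma>)) x y (\<sigma>!j) (x (\<sigma>!j)) (y (\<sigma>!j)) \<and>
        (\<forall>a' b'. feasible_pos W w h (set (take j \<sigma>)) x y (\<sigma>!j) a' b' \<longrightarrow> y (\<sigma>!j) < b' \<or> (y (\<sigma>!j) = b' \<and> x (\<sigma>!j) \<le> a'))"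
      using BL True unfolding is_BL_packing_def Let_def by blast
    have "(x(r:=a)) (\<sigma>!j) = x (\<sigma>!j)" "(y(r:=b)) (\<sigma>!j) = y (\<sigma>!j)" using ne by auto
    then show ?thesis unfolding e c using P by presburger
  next
    case False
    hence jj: "j = length \<sigma>" using j by simp
    have e: "(\<sigma>@[r])!j = r" "take j (\<sigma>@[r]) = \<sigma>" using jj by auto
    have c: "feasible_pos W w h (set \<sigma>) (x(r:=a)) (y(r:=b)) = feasible_pos W w h (set \<sigma>) x y"
      using agree by (intro feasible_pos_cong2) blast
    show ?thesis unfolding e c using F Mn by (simp only: fun_upd_same)
  qed
qed

lemma BL_exists:
  assumes "distinct \<sigma>" "\<forall>i. 0 < w i \<and> 0 < h i \<and> w i \<le> W"
  shows "\<exists>x y. is_BL_packing W w h \<sigma> x y"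
  using assms(1)
proof (induction \<sigma> rule: rev_induct)
  case Nil
  show ?case by (auto simp: is_BL_packing_def)
next
  case (snoc r \<sigma>)
  then obtain x y where BL: "is_BL_packing W w h \<sigma> x y" by auto
  have r: "r \<notin> set \<sigma>" using snoc.prems by auto
  obtain a b where ab: "feasible_pos W w h (set \<sigma>) x y r a b"
    "\<forall>a' b'. feasible_pos W w h (set \<sigma>) x y r a' b' \<longrightarrow> b < b' \<or> (b = b' \<and> a \<le> a')"
    using lexmin_exists[of "set \<sigma>" w h r W x y] assms(2) by auto
  show ?case using BL_snoc[OF BL r ab] by blast
qed

lemma BL_at:
  assumes "is_BL_packing W w h \<sigma> x y" "j < length \<sigma>"
  shows "feasible_pos W w h (set (take j \<sigma>)) x y (\<sigma>!j) (x (\<sigma>!j)) (y (\<sigma>!j))"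
    "\<And>a b. feasible_pos W w h (set (take j \<sigma>)) x y (\<sigma>!j) a b \<Longrightarrow> y (\<sigma>!j) < b \<or> (y (\<sigma>!j) = b \<and> x (\<sigma>!j) \<le> a)"
  using assms unfolding is_BL_packing_def Let_def by blast+

lemma BL_unique:
  assumes B1: "is_BL_packing W w h \<sigma> x y" and B2: "is_BL_packing W w h \<sigma> x' y'"
  shows "\<forall>j<length \<sigma>. x (\<sigma>!j) = x' (\<sigma>!j) \<and> y (\<sigma>!j) = y' (\<sigma>!j)"
proof -
  have "j < length \<sigma> \<longrightarrow> x (\<sigma>!j) = x' (\<sigma>!j) \<and> y (\<sigma>!j) = y' (\<sigma>!j)" for j
  proof (induction j rule: less_induct)
    case (less j)
    show ?case
    proof
      assume j: "j < length \<sigma>"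
      have agree: "\<forall>i\<in>set (take j \<sigma>). x i = x' i \<and> y i = y' i"
      proof
        fix i assume "i \<in> set (take j \<sigma>)"
        then obtain l where "l < length (take j \<sigma>)" "i = take j \<sigma> ! l" by (metis in_set_conv_nth)
        hence "l < j" "i = \<sigma>!l" using j by auto
        thus "x i = x' i \<and> y i = y' i" using less.IH j by (metis order.strict_trans)
      qed
      have c: "feasible_pos W w h (set (take j \<sigma>)) x' y' = feasible_pos W w h (set (take j \<sigma>)) x y"
        using agree by (intro feasible_pos_cong2) auto
      note P1 = BL_at[OF B1 j]
      note P2 = BL_at[OF B2 j, unfolded c]
      have q1: "y (\<sigma>!j) < y' (\<sigma>!j) \<or> (y (\<sigma>!j) = y' (\<sigma>!j) \<and> x (\<sigma>!j) \<le> x' (\<sigma>!j))"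
        by (rule P1(2)[OF P2(1)])
      have q2: "y' (\<sigma>!j) < y (\<sigma>!j) \<or> (y' (\<sigma>!j) = y (\<sigma>!j) \<and> x' (\<sigma>!j) \<le> x (\<sigma>!j))"
        by (rule P2(2)[OF P1(1)])
      show "x (\<sigma>!j) = x' (\<sigma>!j) \<and> y (\<sigma>!j) = y' (\<sigma>!j)"
        using q1 q2 by linarith
    qed
  qed
  thus ?thesis by blast
qed

lemma BL_height_eq:
  assumes ord: "is_ordering n \<sigma>" and BL: "is_BL_packing W w h \<sigma> x y"
  shows "BL_height W n w h \<sigma> = packing_height n h y"
  unfolding BL_height_def
proof (rule the_equality)
  show "\<exists>x y'. is_BL_packing W w h \<sigma> x y' \<and> packing_height n h y = packing_height n h y'"
    using BL by blast
  fix H assume "\<exists>x' y'. is_BL_packing W w h \<sigma> x' y' \<and> H = packing_height n h y'"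
  then obtain x' y' where B2: "is_BL_packing W w h \<sigma> x' y'" and H: "H = packing_height n h y'" by blast
  have U: "\<forall>j<length \<sigma>. x (\<sigma>!j) = x' (\<sigma>!j) \<and> y (\<sigma>!j) = y' (\<sigma>!j)" by (rule BL_unique[OF BL B2])
  have "\<forall>i<n. y i = y' i"
  proof (intro allI impI)
    fix i assume "i < n"
    hence "i \<in> set \<sigma>" using ord by (auto simp: is_ordering_def)
    then obtain j where "j < length \<sigma>" "i = \<sigma>!j" by (metis in_set_conv_nth)
    thus "y i = y' i" using U by auto
  qed
  hence "(\<lambda>i. y i + h i) ` {..<n} = (\<lambda>i. y' i + h i) ` {..<n}" by auto
  thus "H = packing_height n h y" unfolding H packing_height_def by simp
qed

lemma sum_prefix_mono:
  fixes a b :: nat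
  assumes "\<forall>i. 0 \<le> f i" "a \<le> b"
  shows "(\<Sum>i<a. f i) \<le> (\<Sum>i<b. (f i::real))"
  using assms by (intro sum_mono2) auto

lemma BL_bottom:
  assumes BL: "is_BL_packing W w h \<sigma> x y" and pos: "\<forall>i. 0 < w i \<and> 0 < h i"
    and j: "j < length \<sigma>" and fit: "(\<Sum>i<Suc j. w (\<sigma>!i)) \<le> W"
  shows "x (\<sigma>!j) = (\<Sum>i<j. w (\<sigma>!i)) \<and> y (\<sigma>!j) = 0"
proof -
  define X where "X l = (\<Sum>i<l. w (\<sigma>!i))" for l
  have Xnn: "\<forall>i. 0 \<le> w (\<sigma>!i)" using pos by (simp add: less_imp_le)
  have Xmono: "X a \<le> X b" if "a \<le> b" for a b
    unfolding X_def by (rule sum_prefix_mono[OF Xnn that])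
  have XSuc: "X (Suc l) = X l + w (\<sigma>!l)" for l unfolding X_def by simp
  have "l \<le> j \<longrightarrow> x (\<sigma>!l) = X l \<and> y (\<sigma>!l) = 0" for l
  proof (induction l rule: less_induct)
    case (less l)
    show ?case
    proof
      assume lj: "l \<le> j"
      hence ll: "l < length \<sigma>" using j by simp
      define r where "r = \<sigma>!l"
      define S where "S = set (take l \<sigma>)"
      have Sel: "\<exists>m<l. i = \<sigma>!m" if "i \<in> S" for i
      proof -
        have "i \<in> set (take l \<sigma>)" using that S_def by simp
        hence "\<exists>m < length (take l \<sigma>). take l \<sigma> ! m = i" by (simp only: in_set_conv_nth)
        then obtain m where "m < length (take l \<sigma>)" "i = take l \<sigma> ! m" by metis
        hence "m < l" "i = \<sigma>!m" using ll by auto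
        thus ?thesis by blast
      qed
      have Spos: "x (\<sigma>!m) = X m \<and> y (\<sigma>!m) = 0" if "m < l" for m
      proof -
        have "m \<le> j" using that lj by simp
        thus ?thesis using less.IH[OF that] by blast
      qed
      note P = BL_at[OF BL ll, folded r_def S_def]
      have feasX: "feasible_pos W w h S x y r (X l) 0"
        unfolding feasible_pos_def
      proof (intro conjI ballI)
        show "0 \<le> X l" unfolding X_def using Xnn by (simp add: sum_nonneg)
        have "X l + w r = X (Suc l)" using XSuc r_def by simp
        also have "\<dots> \<le> X (Suc j)" using Xmono lj by simp
        also have "\<dots> \<le> W" using fit X_def by simp
        finally show "X l + w r \<le> W" .
        show "0 \<le> (0::real)" by simp
        fix i assume "i \<in> S"
        then obtain m where m: "m < l" "i = \<sigma>!m" using Sel by blast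
        have "x i + w i = X (Suc m)" using Spos[OF m(1)] m XSuc by simp
        also have "\<dots> \<le> X l" using Xmono m by simp
        finally have "x i + w i \<le> X l" .
        thus "open_rect (X l) 0 (w r) (h r) \<inter> open_rect (x i) (y i) (w i) (h i) = {}"
          using rect_disj_iff pos by blast
      qed
      have y0: "0 \<le> y r" and x0: "0 \<le> x r" using P(1) unfolding feasible_pos_def by blast+
      have "y r < 0 \<or> (y r = 0 \<and> x r \<le> X l)" using P(2)[OF feasX] .
      hence yr: "y r = 0" and xr: "x r \<le> X l" using y0 by auto
      have "X l \<le> x r"
      proof (rule ccontr)
        assume nx: "\<not> X l \<le> x r"
        define m where "m = Max {i. i < l \<and> X i \<le> x r}"
        have fin: "finite {i. i < l \<and> X i \<le> x r}" by simp
        have "X 0 = 0" unfolding X_def by simp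
        hence l0: "0 < l" using nx x0 by (cases l) auto
        hence ne: "0 \<in> {i. i < l \<and> X i \<le> x r}" using \<open>X 0 = 0\<close> x0 by simp
        have "m \<in> {i. i < l \<and> X i \<le> x r}" unfolding m_def using fin ne by (intro Max_in) blast+
        hence mm: "m < l" "X m \<le> x r" by auto
        have "x r < X (Suc m)"
        proof (cases "Suc m < l")
          case True
          have "Suc m \<notin> {i. i < l \<and> X i \<le> x r}"
          proof
            assume "Suc m \<in> {i. i < l \<and> X i \<le> x r}"
            hence "Suc m \<le> m" using Max_ge[OF fin] unfolding m_def by blast
            thus False by simp
          qed
          thus ?thesis using True by auto
        next
          case False
          hence "Suc m = l" using mm by simp
          thus ?thesis using nx by simp
        qed
        hence xm: "x r < X m + w (\<sigma>!m)" using XSuc by simp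
        have iS: "\<sigma>!m \<in> S" unfolding S_def using mm(1) ll
          by (metis in_set_conv_nth length_take min.absorb4 nth_take)
        have D: "open_rect (x r) (y r) (w r) (h r) \<inter> open_rect (x (\<sigma>!m)) (y (\<sigma>!m)) (w (\<sigma>!m)) (h (\<sigma>!m)) = {}"
          using P(1) iS unfolding feasible_pos_def by blast
        have "x r + w r \<le> x (\<sigma>!m) \<or> x (\<sigma>!m) + w (\<sigma>!m) \<le> x r \<or> y r + h r \<le> y (\<sigma>!m) \<or> y (\<sigma>!m) + h (\<sigma>!m) \<le> y r"
          using D rect_disj_iff pos by blast
        moreover have "x (\<sigma>!m) = X m" "y (\<sigma>!m) = 0" using Spos[OF mm(1)] by auto
        moreover have "0 < w r" "0 < h r" "0 < h (\<sigma>!m)" using pos by auto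
        ultimately show False using mm xm yr by linarith
      qed
      thus "x (\<sigma>!l) = X l \<and> y (\<sigma>!l) = 0" using xr yr r_def by simp
    qed
  qed
  thus ?thesis using X_def by simp
qed

definition wI :: "nat \<Rightarrow> nat \<Rightarrow> nat \<Rightarrow> real" where
  "wI M N i = (if i < M then real N else 1)"

lemma wI_total: "sum (wI M N) {..<M+t} = real (M*N) + real t"
proof (induction t)
  case 0
  have "sum (wI M N) {..<M} = sum (\<lambda>_. real N) {..<M}" by (rule sum.cong) (auto simp: wI_def)
  thus ?case by simp
next
  case (Suc t)
  thus ?case by (simp add: wI_def)
qed

lemma ordering_facts:
  assumes "is_ordering n \<sigma>"
  shows "distinct \<sigma>" "length \<sigma> = n" "\<And>i. i < n \<Longrightarrow> \<sigma>!i < n"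
    "\<And>u. u < n \<Longrightarrow> \<exists>i<n. \<sigma>!i = u" "inj_on (nth \<sigma>) {..<n}"
proof -
  show d: "distinct \<sigma>" using assms by (simp add: is_ordering_def)
  have s: "set \<sigma> = {..<n}" using assms by (simp add: is_ordering_def)
  show l: "length \<sigma> = n" using distinct_card[OF d] s by simp
  show "\<And>i. i < n \<Longrightarrow> \<sigma>!i < n" using s l nth_mem by fastforce
  show "\<And>u. u < n \<Longrightarrow> \<exists>i<n. \<sigma>!i = u" using s l by (metis in_set_conv_nth lessThan_iff)
  show "inj_on (nth \<sigma>) {..<n}" using d l by (intro inj_on_nth) auto
qed

lemma run_bound:
  assumes ord: "is_ordering (M+N) \<sigma>" and A: "A \<subseteq> {..<M+N}" "\<forall>i\<in>A. M \<le> \<sigma>!i"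
    and e: "e < M+N" "e \<notin> A" "M \<le> \<sigma>!e"
  shows "card A \<le> N - 1"
proof -
  note of = ordering_facts[OF ord]
  have inj: "inj_on (nth \<sigma>) A" using of(5) A(1) inj_on_subset by blast
  have "nth \<sigma> ` A \<subseteq> {M..<M+N} - {\<sigma>!e}"
  proof
    fix u assume "u \<in> nth \<sigma> ` A"
    then obtain i where i: "i \<in> A" "u = \<sigma>!i" by blast
    have "i < M+N" using i A by auto
    hence "u < M+N" "M \<le> u" using of(3) i A by auto
    moreover have "u \<noteq> \<sigma>!e"
    proof
      assume "u = \<sigma>!e"
      hence "i = e" using of(5) i \<open>i < M+N\<close> e(1) unfolding inj_on_def by blast
      thus False using i e by simp
    qed
    ultimately show "u \<in> {M..<M+N} - {\<sigma>!e}" by simp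
  qed
  hence "card (nth \<sigma> ` A) \<le> card ({M..<M+N} - {\<sigma>!e})" by (intro card_mono) auto
  also have "\<dots> = N - 1" using e of(3)[OF e(1)] by simp
  finally show ?thesis using card_image[OF inj] by simp
qed

lemma prefix_bound:
  assumes ord: "is_ordering (M+N) \<sigma>" and l: "l \<le> e" and e: "e < M+N" "\<sigma>!e < M"
  shows "(\<Sum>i<l. wI M N (\<sigma>!i)) \<le> real (M*N)"
proof -
  note of = ordering_facts[OF ord]
  have inj: "inj_on (nth \<sigma>) {..<l}" using of(5) l e inj_on_subset[of _ "{..<M+N}"] by fastforce
  have "(\<Sum>i<l. wI M N (\<sigma>!i)) = sum (wI M N) (nth \<sigma> ` {..<l})"
    using sum.reindex[OF inj, of "wI M N"] by simp
  also have "\<dots> \<le> sum (wI M N) ({..<M+N} - {\<sigma>!e})"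
  proof (rule sum_mono2)
    show "finite ({..<M+N} - {\<sigma>!e})" by simp
    show "nth \<sigma> ` {..<l} \<subseteq> {..<M+N} - {\<sigma>!e}"
    proof
      fix u assume "u \<in> nth \<sigma> ` {..<l}"
      then obtain i where i: "i < l" "u = \<sigma>!i" by blast
      have "i < M+N" using i l e by simp
      hence "u < M+N" using of(3) i by simp
      moreover have "u \<noteq> \<sigma>!e"
      proof
        assume "u = \<sigma>!e"
        hence "i = e" using of(5) i \<open>i < M+N\<close> e(1) unfolding inj_on_def by blast
        thus False using i l by simp
      qed
      ultimately show "u \<in> {..<M+N} - {\<sigma>!e}" by simp
    qed
    show "\<And>b. b \<in> {..<M + N} - {\<sigma> ! e} - nth \<sigma> ` {..<l} \<Longrightarrow> 0 \<le> wI M N b"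
      by (simp add: wI_def)
  qed
  also have "\<dots> = sum (wI M N) {..<M+N} - wI M N (\<sigma>!e)"
    using of(3)[OF e(1)] by (simp add: sum_diff1)
  also have "\<dots> = real (M*N)" using wI_total[of M N N] e by (simp add: wI_def)
  finally show ?thesis .
qed

lemma count_form:
  "(\<Sum>i<j. wI M N (\<sigma>!i)) = real N * card {i. i<j \<and> \<sigma>!i < M} + card {i. i<j \<and> \<not> \<sigma>!i < M}"
proof -
  have "(\<Sum>i<j. wI M N (\<sigma>!i)) = (\<Sum>i<j. if \<sigma>!i < M then real N else 1)" by (simp add: wI_def)
  also have "\<dots> = sum (\<lambda>_. real N) ({..<j} \<inter> {i. \<sigma>!i < M}) + sum (\<lambda>_. 1) ({..<j} \<inter> - {i. \<sigma>!i < M})"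
    by (rule sum.If_cases) simp
  also have "\<dots> = real N * card ({..<j} \<inter> {i. \<sigma>!i < M}) + card ({..<j} \<inter> - {i. \<sigma>!i < M})"
    by simp
  also have "{..<j} \<inter> {i. \<sigma>!i < M} = {i. i<j \<and> \<sigma>!i < M}" by auto
  also have "{..<j} \<inter> - {i. \<sigma>!i < M} = {i. i<j \<and> \<not> \<sigma>!i < M}" by auto
  finally show ?thesis .
qed

lemma tiny_sum:
  assumes "\<forall>i. a \<le> i \<and> i < b \<longrightarrow> M \<le> \<sigma>!i"
  shows "(\<Sum>i\<in>{a..<b}. wI M N (\<sigma>!i)) = real (card {a..<b})"
proof -
  have "(\<Sum>i\<in>{a..<b}. wI M N (\<sigma>!i)) = (\<Sum>i\<in>{a..<b}. 1)"
    by (rule sum.cong) (use assms in \<open>auto simp: wI_def\<close>)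
  thus ?thesis by simp
qed

lemma lower:
  fixes M N :: nat
  assumes M: "4 \<le> M" and N: "2 \<le> N"
    and ord: "is_ordering (M+N) \<sigma>"
    and BL: "is_BL_packing (real (M*N+1)) (wI M N) (wI M N) \<sigma> x y"
    and P1: "i1 < i2" "i2 < M - 2" "M \<le> \<sigma>!i1" "M \<le> \<sigma>!i2"
    and P2: "p < q" "q < r" "r < M+N" "M \<le> \<sigma>!p" "\<sigma>!q < M" "M \<le> \<sigma>!r"
  shows "2 * real N \<le> packing_height (M+N) (wI M N) y"
proof -
  define n where "n = M+N"
  define W where "W = real (M*N+1)"
  define w where "w = wI M N"
  note of = ordering_facts[OF ord, folded n_def]
  have pos: "\<forall>i. 0 < w i \<and> 0 < w i" using N by (simp add: w_def wI_def)
  have wU: "\<And>i. i < M \<Longrightarrow> w i = real N" and wT: "\<And>i. \<not> i < M \<Longrightarrow> w i = 1"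
    by (simp_all add: w_def wI_def)
  define X where "X j = (\<Sum>i<j. w (\<sigma>!i))" for j
  define UA where "UA = {i. i < n \<and> \<sigma>!i < M}"
  have finUA: "finite UA" by (simp add: UA_def)
  have qUA: "q \<in> UA" using P2 by (simp add: UA_def n_def)
  define f where "f = Max UA"
  have fUA: "f \<in> UA" unfolding f_def using finUA qUA by (intro Max_in) auto
  have fmax: "\<And>i. i \<in> UA \<Longrightarrow> i \<le> f" unfolding f_def using finUA by simp
  have fn: "f < n" and Ff: "\<sigma>!f < M" using fUA by (auto simp: UA_def)
  define F where "F = \<sigma>!f"
  define U where "U = {j. j < f \<and> \<sigma>!j < M}"
  have UUA: "U = UA - {f}"
  proof
    show "U \<subseteq> UA - {f}" using fn by (auto simp: U_def UA_def)
    show "UA - {f} \<subseteq> U"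
    proof
      fix i assume i: "i \<in> UA - {f}"
      hence "i \<le> f" using fmax by blast
      thus "i \<in> U" using i by (auto simp: U_def UA_def)
    qed
  qed
  have imgUA: "nth \<sigma> ` UA = {..<M}"
  proof
    show "nth \<sigma> ` UA \<subseteq> {..<M}" by (auto simp: UA_def)
    show "{..<M} \<subseteq> nth \<sigma> ` UA"
    proof
      fix u assume "u \<in> {..<M}"
      hence "u < n" by (simp add: n_def)
      then obtain i where "i < n" "\<sigma>!i = u" using of(4) by blast
      thus "u \<in> nth \<sigma> ` UA" using \<open>u \<in> {..<M}\<close> by (auto simp: UA_def)
    qed
  qed
  have injUA: "inj_on (nth \<sigma>) UA" using of(5) by (rule inj_on_subset) (auto simp: UA_def)
  have cUA: "card UA = M" using card_image[OF injUA] imgUA by simp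
  have cU: "card U = M - 1" using cUA fUA finUA by (simp add: UUA)
  have finU: "finite U" by (simp add: U_def)
  have Une: "U \<noteq> {}" using cU M by auto
  have Xle: "X l \<le> real (M*N)" if "l \<le> f" for l
    unfolding X_def w_def using prefix_bound[OF ord that] fn Ff by (simp add: n_def)
  have bottom: "x (\<sigma>!l) = X l \<and> y (\<sigma>!l) = 0" if "l < f" for l
  proof -
    have "X (Suc l) \<le> W" using Xle[of "Suc l"] that by (simp add: W_def)
    thus ?thesis using BL_bottom[OF BL[folded W_def w_def] pos, of l] that fn of(2)
      unfolding X_def by simp
  qed
  note PF = BL_at[OF BL[folded W_def w_def], of f, folded F_def]
  have feasF: "feasible_pos W w w (set (take f \<sigma>)) x y F (x F) (y F)" using PF fn of(2) by simp
  have inS: "\<sigma>!j \<in> set (take f \<sigma>)" if "j < f" for j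
    using that fn of(2) by (metis in_set_conv_nth length_take min.absorb4 nth_take)
  have xF: "0 \<le> x F" "x F + real N \<le> W" and yF0: "0 \<le> y F"
    using feasF wU[OF Ff] unfolding feasible_pos_def F_def by auto
  have "real N \<le> y F"
  proof (rule ccontr)
    assume yN: "\<not> real N \<le> y F"
    have sep: "X j + real N \<le> x F \<or> x F + real N \<le> X j" if jU: "j \<in> U" for j
    proof -
      have jf: "j < f" and ju: "\<sigma>!j < M" using jU by (auto simp: U_def)
      have "open_rect (x F) (y F) (w F) (w F) \<inter> open_rect (x (\<sigma>!j)) (y (\<sigma>!j)) (w (\<sigma>!j)) (w (\<sigma>!j)) = {}"
        using feasF inS[OF jf] unfolding feasible_pos_def by blast
      hence "x F + w F \<le> x (\<sigma>!j) \<or> x (\<sigma>!j) + w (\<sigma>!j) \<le> x F \<or> y F + w F \<le> y (\<sigma>!j) \<or> y (\<sigma>!j) + w (\<sigma>!j) \<le> y F"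
        using rect_disj_iff pos by blast
      moreover have "w F = real N" "w (\<sigma>!j) = real N" using wU Ff ju F_def by auto
      moreover have "x (\<sigma>!j) = X j" "y (\<sigma>!j) = 0" using bottom[OF jf] by auto
      ultimately show ?thesis using yN yF0 N by auto
    qed
    define Jl where "Jl = {j\<in>U. X j + real N \<le> x F}"
    show False
    proof (cases "Jl = {}")
      case True
      define j1 where "j1 = Min U"
      have j1U: "j1 \<in> U" unfolding j1_def using finU Une by (rule Min_in)
      have j1min: "\<And>i. i \<in> U \<Longrightarrow> j1 \<le> i" unfolding j1_def using finU by simp
      have j1f: "j1 < f" using j1U by (simp add: U_def)
      have tiny: "\<forall>i. 0 \<le> i \<and> i < j1 \<longrightarrow> M \<le> \<sigma>!i"
      proof (intro allI impI)
        fix i assume "0 \<le> i \<and> i < j1"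
        hence "i < j1" by simp
        show "M \<le> \<sigma>!i"
        proof (rule ccontr)
          assume "\<not> M \<le> \<sigma>!i"
          hence "i \<in> U" using \<open>i < j1\<close> j1f by (simp add: U_def)
          thus False using j1min \<open>i < j1\<close> by fastforce
        qed
      qed
      have Xj1: "X j1 = real j1"
        using tiny_sum[OF tiny, of N] unfolding X_def w_def by (simp add: atLeast0LessThan)
      have qj1: "j1 \<le> q"
      proof (cases "q = f")
        case True thus ?thesis using j1f by simp
      next
        case False
        hence "q \<in> U" using qUA fmax[OF qUA] by (auto simp: U_def UA_def)
        thus ?thesis by (rule j1min)
      qed
      have "card {..<j1} \<le> N - 1"
        by (rule run_bound[OF ord _ _ P2(3) _ P2(6)]) (use tiny j1f fn qj1 P2 in \<open>auto simp: n_def\<close>)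
      hence "X j1 \<le> real N - 1" using Xj1 N by simp
      moreover have "x F + real N \<le> X j1" using sep[OF j1U] True j1U by (auto simp: Jl_def)
      ultimately show False using xF by simp
    next
      case False
      have finJl: "finite Jl" using finU by (simp add: Jl_def)
      define j where "j = Max Jl"
      have jJl: "j \<in> Jl" unfolding j_def using finJl False by (rule Max_in)
      have jU: "j \<in> U" and jx: "X j + real N \<le> x F" using jJl by (auto simp: Jl_def)
      have jmax: "\<And>i. i \<in> Jl \<Longrightarrow> i \<le> j" unfolding j_def using finJl by simp
      have jf: "j < f" using jU by (simp add: U_def)
      show False
      proof (cases "\<exists>j'\<in>U. j < j'")
        case True
        define G where "G = {j'\<in>U. j < j'}"
        have finG: "finite G" using finU by (simp add: G_def)
        have Gne: "G \<noteq> {}" using True by (auto simp: G_def)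
        define j' where "j' = Min G"
        have j'G: "j' \<in> G" unfolding j'_def using finG Gne by (rule Min_in)
        have j'min: "\<And>i. i \<in> G \<Longrightarrow> j' \<le> i" unfolding j'_def using finG by simp
        have j'U: "j' \<in> U" and jj': "j < j'" using j'G by (auto simp: G_def)
        have j'f: "j' < f" using j'U by (simp add: U_def)
        have "j' \<notin> Jl" using jmax jj' by fastforce
        hence xj': "x F + real N \<le> X j'" using sep[OF j'U] j'U by (auto simp: Jl_def)
        have tiny: "\<forall>i. Suc j \<le> i \<and> i < j' \<longrightarrow> M \<le> \<sigma>!i"
        proof (intro allI impI)
          fix i assume i: "Suc j \<le> i \<and> i < j'"
          show "M \<le> \<sigma>!i"
          proof (rule ccontr)
            assume "\<not> M \<le> \<sigma>!i"
            hence "i \<in> G" using i j'f by (simp add: U_def G_def)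
            thus False using j'min i by fastforce
          qed
        qed
        have split: "X j' = X (Suc j) + (\<Sum>i\<in>{Suc j..<j'}. w (\<sigma>!i))"
          unfolding X_def using jj'
          by (metis Suc_leI atLeast0LessThan le0 sum.atLeastLessThan_concat)
        have mid: "(\<Sum>i\<in>{Suc j..<j'}. w (\<sigma>!i)) = real (card {Suc j..<j'})"
          using tiny_sum[OF tiny, of N] unfolding w_def .
        have XS: "X (Suc j) = X j + real N" unfolding X_def using wU jU by (simp add: U_def)
        have "card {Suc j..<j'} \<le> N - 1"
        proof (cases "q \<le> j")
          case True
          show ?thesis
            by (rule run_bound[OF ord _ _ _ _ P2(4)]) (use tiny j'f fn True P2 in \<open>auto simp: n_def\<close>)
        next
          case False
          have "j' \<le> q"
          proof (cases "q = f")
            case True thus ?thesis using j'f by simp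
          next
            case False
            hence "q \<in> U" using qUA fmax[OF qUA] by (auto simp: U_def UA_def)
            hence "q \<in> G" using \<open>\<not> q \<le> j\<close> by (simp add: G_def)
            thus ?thesis by (rule j'min)
          qed
          show ?thesis
            by (rule run_bound[OF ord _ _ P2(3) _ P2(6)]) (use tiny j'f fn \<open>j' \<le> q\<close> P2 in \<open>auto simp: n_def\<close>)
        qed
        hence "X j' \<le> X j + real N + (real N - 1)" using split mid XS N by simp
        thus False using xj' jx by simp
      next
        case False
        hence jmaxU: "\<And>i. i \<in> U \<Longrightarrow> i \<le> j" using not_less by blast
        have units: "{i. i<j \<and> \<sigma>!i < M} = U - {j}"
        proof
          show "{i. i<j \<and> \<sigma>!i < M} \<subseteq> U - {j}" using jf by (auto simp: U_def)
          show "U - {j} \<subseteq> {i. i<j \<and> \<sigma>!i < M}"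
          proof
            fix i assume i: "i \<in> U - {j}"
            hence "i \<le> j" using jmaxU by blast
            thus "i \<in> {i. i<j \<and> \<sigma>!i < M}" using i by (auto simp: U_def)
          qed
        qed
        have cu: "card {i. i<j \<and> \<sigma>!i < M} = M - 2" using cU jU finU units by simp
        have "card {i. i<j \<and> \<sigma>!i < M} \<le> card {..<j}"
          by (rule card_mono) auto
        hence jM: "M - 2 \<le> j" using cu by simp
        have "{i1, i2} \<subseteq> {i. i<j \<and> \<not> \<sigma>!i < M}" using P1 jM by auto
        hence "card {i1,i2} \<le> card {i. i<j \<and> \<not> \<sigma>!i < M}" by (intro card_mono) auto
        hence ct: "2 \<le> card {i. i<j \<and> \<not> \<sigma>!i < M}" using P1 by simp
        have "X j = real N * real (M - 2) + real (card {i. i<j \<and> \<not> \<sigma>!i < M})"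
          unfolding X_def w_def count_form cu by simp
        hence "X j \<ge> real N * real (M-2) + 2" using ct by simp
        moreover have "real N * real (M-2) + 2 + real N + real N > W"
        proof -
          have "real (M-2) = real M - 2" using M by simp
          thus ?thesis unfolding W_def by (simp add: algebra_simps)
        qed
        ultimately show False using jx xF by linarith
      qed
    qed
  qed
  have "y F + w F \<in> (\<lambda>i. y i + w i) ` {..<n}" using of(3)[OF fn] F_def by auto
  hence "y F + w F \<le> packing_height n w y" unfolding packing_height_def by (intro Max_ge) auto
  moreover have "w F = real N" using wU Ff F_def by simp
  ultimately show ?thesis using \<open>real N \<le> y F\<close> unfolding n_def w_def by simp
qed

definition s0 :: "nat \<Rightarrow> nat list" where
  "s0 k = [k+4..<k+4+k+2] @ [0..<k+3] @ [k+4+k+2..<k+4+(2*k+3)] @ [k+3]"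

lemma s0_len: "length (s0 k) = (k+4) + (2*k+3)"
  by (simp add: s0_def)

lemma s0_ord: "is_ordering ((k+4) + (2*k+3)) (s0 k)"
proof -
  have "set (s0 k) = {..<(k+4) + (2*k+3)}" by (auto simp: s0_def)
  moreover have "distinct (s0 k)" by (auto simp: s0_def)
  ultimately show ?thesis by (simp add: is_ordering_def)
qed

lemma s0_head: "i < k+2 \<Longrightarrow> s0 k ! i = k+4+i"
  by (simp add: s0_def nth_append del: upt_Suc)

lemma s0_mid: "k+2 \<le> i \<Longrightarrow> i < 2*k+5 \<Longrightarrow> s0 k ! i = i - (k+2)"
  by (simp add: s0_def nth_append del: upt_Suc)

lemma s0_tail:
  assumes "2*k+5 \<le> i" "i < 3*k+6" shows "s0 k ! i = i + 1"
proof -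
  define A where "A = [k+4..<k+4+k+2]"
  define B where "B = [0..<k+3]"
  define Cl where "Cl = [k+4+k+2..<k+4+(2*k+3)]"
  have lA: "length A = k+2" and lB: "length B = k+3" and lC: "length Cl = k+1"
    by (simp_all add: A_def B_def Cl_def)
  have "s0 k = A @ (B @ (Cl @ [k+3]))" by (simp add: s0_def A_def B_def Cl_def)
  hence "s0 k ! i = (B @ (Cl @ [k+3])) ! (i - length A)"
    using assms lA by (simp add: nth_append_right)
  also have "\<dots> = (Cl @ [k+3]) ! (i - length A - length B)"
    using assms lA lB by (simp add: nth_append_right)
  also have "\<dots> = Cl ! (i - length A - length B)"
    using assms lA lB lC by (simp add: nth_append_left)
  also have "\<dots> = i + 1" using assms lA lB by (simp add: Cl_def)
  finally show ?thesis .
qed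

lemma s0_last: "s0 k ! (3*k+6) = k+3"
  by (simp add: s0_def nth_append del: upt_Suc)

lemma two_elems:
  assumes "finite S" "2 \<le> card S"
  obtains a b where "a \<in> S" "b \<in> S" "a < (b::nat)"
proof -
  obtain a where a: "a \<in> S" using assms by fastforce
  have "1 \<le> card (S - {a})" using assms a by simp
  hence "S - {a} \<noteq> {}" by (metis card.empty not_one_le_zero)
  then obtain b where b: "b \<in> S - {a}" by blast
  show ?thesis
  proof (cases "a < b")
    case True thus ?thesis using that a b by blast
  next
    case False
    hence "b < a" using b by auto
    thus ?thesis using that a b by blast
  qed
qed

lemma perm_props:
  assumes kp: "k_perm ((k+4) + (2*k+3)) k (s0 k) \<sigma>"
  shows "\<exists>i1 i2. i1 < i2 \<and> i2 < (k+4) - 2 \<and> k+4 \<le> \<sigma>!i1 \<and> k+4 \<le> \<sigma>!i2"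
    "\<exists>p q r. p < q \<and> q < r \<and> r < (k+4)+(2*k+3) \<and> k+4 \<le> \<sigma>!p \<and> \<sigma>!q < k+4 \<and> k+4 \<le> \<sigma>!r"
proof -
  define C where "C = {i. i < length (s0 k) \<and> s0 k ! i \<noteq> \<sigma> ! i}"
  have cC: "card C \<le> k" and finC: "finite C" using kp by (auto simp: k_perm_def C_def)
  have big: "m \<le> card (A - C)" if "finite A" "k + m \<le> card A" for A m
    using diff_card_le_card_Diff[OF finC, of A] that cC by linarith
  have unch: "\<sigma>!i = s0 k ! i" if "i \<in> A - C" "A \<subseteq> {..<3*k+7}" for A i
    using that s0_len[of k] by (auto simp: C_def)
  have "2 \<le> card ({..<k+2} - C)" using big[of "{..<k+2}" 2] by simp
  then obtain i1 i2 where i: "i1 \<in> {..<k+2} - C" "i2 \<in> {..<k+2} - C" "i1 < i2"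
    using two_elems by (metis finite_Diff finite_lessThan)
  have "\<sigma>!i1 = s0 k ! i1" "\<sigma>!i2 = s0 k ! i2" using unch[of i1 "{..<k+2}"] unch[of i2 "{..<k+2}"] i by auto
  hence "k+4 \<le> \<sigma>!i1" "k+4 \<le> \<sigma>!i2" using i s0_head by auto
  thus "\<exists>i1 i2. i1 < i2 \<and> i2 < (k+4) - 2 \<and> k+4 \<le> \<sigma>!i1 \<and> k+4 \<le> \<sigma>!i2" using i by auto
  have "1 \<le> card ({k+2..<2*k+5} - C)" using big[of "{k+2..<2*k+5}" 1] by simp
  hence "{k+2..<2*k+5} - C \<noteq> {}" by (metis card.empty not_one_le_zero)
  then obtain q where q: "q \<in> {k+2..<2*k+5} - C" by blast
  have "1 \<le> card ({2*k+5..<3*k+6} - C)" using big[of "{2*k+5..<3*k+6}" 1] by simp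
  hence "{2*k+5..<3*k+6} - C \<noteq> {}" by (metis card.empty not_one_le_zero)
  then obtain r where r: "r \<in> {2*k+5..<3*k+6} - C" by blast
  have "\<sigma>!q = s0 k ! q" using unch[OF q] by fastforce
  hence "\<sigma>!q < k+4" using q s0_mid by auto
  moreover have "\<sigma>!r = s0 k ! r" using unch[OF r] by fastforce
  hence "k+4 \<le> \<sigma>!r" using r s0_tail by auto
  ultimately show "\<exists>p q r. p < q \<and> q < r \<and> r < (k+4)+(2*k+3) \<and> k+4 \<le> \<sigma>!p \<and> \<sigma>!q < k+4 \<and> k+4 \<le> \<sigma>!r"
    using i q r \<open>k+4 \<le> \<sigma>!i1\<close> by (intro exI[of _ i1] exI[of _ q] exI[of _ r]) auto
qed

lemma lower_k:
  assumes kp: "k_perm ((k+4) + (2*k+3)) k (s0 k) \<sigma>"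
    and BL: "is_BL_packing (real ((k+4)*(2*k+3)+1)) (wI (k+4) (2*k+3)) (wI (k+4) (2*k+3)) \<sigma> x y"
  shows "2 * real (2*k+3) \<le> packing_height ((k+4)+(2*k+3)) (wI (k+4) (2*k+3)) y"
proof -
  obtain i1 i2 where P1: "i1 < i2" "i2 < (k+4) - 2" "k+4 \<le> \<sigma>!i1" "k+4 \<le> \<sigma>!i2"
    using perm_props(1)[OF kp] by blast
  obtain p q r where P2: "p < q" "q < r" "r < (k+4)+(2*k+3)" "k+4 \<le> \<sigma>!p" "\<sigma>!q < k+4" "k+4 \<le> \<sigma>!r"
    using perm_props(2)[OF kp] by blast
  have ord: "is_ordering ((k+4) + (2*k+3)) \<sigma>" using kp by (simp add: k_perm_def)
  show ?thesis by (rule lower[OF _ _ ord BL P1 P2]) auto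
qed

lemma upper_s0:
  assumes BL: "is_BL_packing (real ((k+4)*(2*k+3)+1)) (wI (k+4) (2*k+3)) (wI (k+4) (2*k+3)) (s0 k) x y"
  shows "packing_height ((k+4)+(2*k+3)) (wI (k+4) (2*k+3)) y \<le> 2 * real (2*k+3)"
proof -
  define M where "M = k+4"
  define N where "N = 2*k+3"
  define W where "W = real (M*N+1)"
  define w where "w = wI M N"
  define n where "n = M+N"
  have ord: "is_ordering n (s0 k)" using s0_ord[of k] by (simp add: n_def M_def N_def)
  note of = ordering_facts[OF ord]
  note BL' = BL[folded M_def N_def, folded W_def w_def]
  have pos: "\<forall>i. 0 < w i \<and> 0 < w i" by (simp add: w_def wI_def N_def)
  define e where "e = 3*k+6"
  have en: "e < n" and ne: "n = Suc e" by (simp_all add: e_def n_def M_def N_def)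
  have eu: "s0 k ! e < M" using s0_last[of k] by (simp add: e_def M_def)
  have wle: "w i \<le> real N" for i by (simp add: w_def wI_def N_def)
  have bottom: "y (s0 k ! l) = 0" if "l < e" for l
  proof -
    have "(\<Sum>i<Suc l. w (s0 k ! i)) \<le> real (M*N)"
      unfolding w_def using prefix_bound[OF s0_ord[of k, folded M_def N_def], of "Suc l" e] that en eu
      by (simp add: n_def)
    hence "(\<Sum>i<Suc l. w (s0 k ! i)) \<le> W" by (simp add: W_def)
    thus ?thesis using BL_bottom[OF BL' pos, of l] that en of(2) by simp
  qed
  define F where "F = s0 k ! e"
  note PF = BL_at[OF BL', of e, folded F_def]
  have feas: "feasible_pos W w w (set (take e (s0 k))) x y F 0 (real N)"
    unfolding feasible_pos_def
  proof (intro conjI ballI)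
    show "0 \<le> (0::real)" by simp
    have "1 \<le> M" by (simp add: M_def)
    hence "N \<le> M*N" by (metis mult_1 mult_le_mono1)
    hence "N \<le> M*N+1" by linarith
    hence "real N \<le> W" unfolding W_def by (simp only: of_nat_le_iff)
    thus "0 + w F \<le> W" using wle[of F] by simp
    show "0 \<le> real N" by simp
    fix i assume "i \<in> set (take e (s0 k))"
    then obtain l where "l < length (take e (s0 k))" "take e (s0 k) ! l = i" by (metis in_set_conv_nth)
    hence l: "l < e" "i = s0 k ! l" using en of(2) by auto
    have "y i + w i \<le> real N" using bottom[OF l(1)] l(2) wle[of i] by simp
    thus "open_rect 0 (real N) (w F) (w F) \<inter> open_rect (x i) (y i) (w i) (w i) = {}"
      using rect_disj_iff pos by blast
  qed
  have "y F < real N \<or> (y F = real N \<and> x F \<le> 0)" using PF(2)[OF _ feas] en of(2) by simp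
  hence yF: "y F \<le> real N" by auto
  have "\<forall>i\<in>{..<n}. y i + w i \<le> 2 * real N"
  proof
    fix i assume "i \<in> {..<n}"
    then obtain l where l: "l < n" "s0 k ! l = i" using of(4) by blast
    show "y i + w i \<le> 2 * real N"
    proof (cases "l < e")
      case True
      thus ?thesis using bottom[OF True] l wle[of i] by simp
    next
      case False
      hence "l = e" using l ne by simp
      thus ?thesis using yF l F_def wle[of i] by simp
    qed
  qed
  hence "packing_height n w y \<le> 2 * real N" unfolding packing_height_def
    using en by (subst Max_le_iff) auto
  thus ?thesis by (simp add: n_def w_def M_def N_def)
qed

lemma hopt:
  assumes M: "1 \<le> M" and N: "1 \<le> N"
  shows "h_opt (real (M*N+1)) (M+N) (wI M N) (wI M N) = real N"
proof -
  define w where "w = wI M N"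
  define W where "W = real (M*N+1)"
  have pos: "\<forall>i. 0 < w i \<and> 0 < w i" using N by (simp add: w_def wI_def)
  define x0 where "x0 i = (if i < M then real N * real i else real (M*N))" for i
  define y0 where "y0 i = (if i < M then 0 else real i - real M)" for i
  have fp: "feasible_packing W (M+N) w w x0 y0"
    unfolding feasible_packing_def
  proof (intro conjI allI impI)
    fix i assume i: "i < M+N"
    show "0 \<le> x0 i" by (simp add: x0_def)
    show "0 \<le> y0 i" by (simp add: y0_def)
    show "x0 i + w i \<le> W"
    proof (cases "i < M")
      case True
      have "N*(i+1) \<le> N*M" using True by (intro mult_le_mono2) simp
      hence "real (N*(i+1)) \<le> real (N*M)" by (simp only: of_nat_le_iff)
      thus ?thesis using True by (simp add: x0_def w_def wI_def W_def algebra_simps)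
    next
      case False thus ?thesis by (simp add: x0_def w_def wI_def W_def)
    qed
  next
    fix i j assume i: "i < M+N" and j: "j < M+N" and ij: "i \<noteq> j"
    have "x0 i + w i \<le> x0 j \<or> x0 j + w j \<le> x0 i \<or> y0 i + w i \<le> y0 j \<or> y0 j + w j \<le> y0 i"
    proof (cases "i < M")
      case iM: True
      show ?thesis
      proof (cases "j < M")
        case jM: True
        show ?thesis
        proof (cases "i < j")
          case True
          hence "N*(i+1) \<le> N*j" by (intro mult_le_mono2) simp
          hence "real (N*(i+1)) \<le> real (N*j)" by (simp only: of_nat_le_iff)
          thus ?thesis using iM jM by (simp add: x0_def w_def wI_def algebra_simps)
        next
          case False
          hence "N*(j+1) \<le> N*i" using ij by (intro mult_le_mono2) simp
          hence "real (N*(j+1)) \<le> real (N*i)" by (simp only: of_nat_le_iff)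
          thus ?thesis using iM jM by (simp add: x0_def w_def wI_def algebra_simps)
        qed
      next
        case jM: False
        have "N*(i+1) \<le> N*M" using iM by (intro mult_le_mono2) simp
        hence "real (N*(i+1)) \<le> real (M*N)" by (simp only: of_nat_le_iff mult.commute)
        thus ?thesis using iM jM by (simp add: x0_def w_def wI_def algebra_simps)
      qed
    next
      case iM: False
      show ?thesis
      proof (cases "j < M")
        case jM: True
        have "N*(j+1) \<le> N*M" using jM by (intro mult_le_mono2) simp
        hence "real (N*(j+1)) \<le> real (M*N)" by (simp only: of_nat_le_iff mult.commute)
        thus ?thesis using iM jM by (simp add: x0_def w_def wI_def algebra_simps)
      next
        case jM: False
        have "real i + 1 \<le> real j \<or> real j + 1 \<le> real i" using ij by linarith
        thus ?thesis using iM jM by (auto simp: y0_def w_def wI_def)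
      qed
    qed
    thus "open_rect (x0 i) (y0 i) (w i) (w i) \<inter> open_rect (x0 j) (y0 j) (w j) (w j) = {}"
      using rect_disj_iff pos by blast
  qed
  have ph0: "packing_height (M+N) w y0 = real N"
  proof -
    have le: "\<forall>i\<in>{..<M+N}. y0 i + w i \<le> real N"
    proof
      fix i assume "i \<in> {..<M+N}"
      thus "y0 i + w i \<le> real N" by (cases "i < M") (auto simp: y0_def w_def wI_def)
    qed
    have "y0 0 + w 0 = real N" using M by (simp add: y0_def w_def wI_def)
    hence "real N \<in> (\<lambda>i. y0 i + w i) ` {..<M+N}" using M by force
    hence "real N \<le> packing_height (M+N) w y0" unfolding packing_height_def by (intro Max_ge) auto
    moreover have "packing_height (M+N) w y0 \<le> real N" unfolding packing_height_def
      using le M by (subst Max_le_iff) (auto simp: lessThan_empty_iff)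
    ultimately show ?thesis by simp
  qed
  have lb: "real N \<le> packing_height (M+N) w y" if "feasible_packing W (M+N) w w x y" for x y
  proof -
    have "0 \<le> y 0" using that M unfolding feasible_packing_def by auto
    hence "real N \<le> y 0 + w 0" using M by (simp add: w_def wI_def)
    also have "\<dots> \<le> packing_height (M+N) w y" unfolding packing_height_def
      using M by (intro Max_ge) auto
    finally show ?thesis .
  qed
  have "h_opt W (M+N) w w = real N" unfolding h_opt_def
  proof (rule cInf_eq_minimum)
    show "real N \<in> {packing_height (M+N) w y |x y. feasible_packing W (M+N) w w x y}"
      using fp ph0 by force
    fix s assume "s \<in> {packing_height (M+N) w y |x y. feasible_packing W (M+N) w w x y}"
    thus "real N \<le> s" using lb by blast
  qed
  thus ?thesis by (simp add: w_def W_def)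
qed

theorem theorem5:
  fixes k :: nat
  shows "\<exists>(W::real) (n::nat) (w::nat \<Rightarrow> real) (h::nat \<Rightarrow> real) (\<sigma>0::nat list).
           0 < W \<and> 0 < n \<and> (\<forall>i<n. 0 < w i \<and> w i \<le> W \<and> h i = w i) \<and>
           is_ordering n \<sigma>0 \<and>
           (\<exists>\<sigma>. (improvement_step W n w h k)\<^sup>*\<^sup>* \<sigma>0 \<sigma> \<and> local_optimum W n w h k \<sigma>) \<and>
           (\<forall>\<sigma>. (improvement_step W n w h k)\<^sup>*\<^sup>* \<sigma>0 \<sigma> \<and> local_optimum W n w h k \<sigma> \<longrightarrow>
                BL_height W n w h \<sigma> = 2 * h_opt W n w h)"
proof -
  define M where "M = k+4"
  define N where "N = 2*k+3"
  define W where "W = real (M*N+1)"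
  define n where "n = M+N"
  define w where "w = wI M N"
  define \<sigma>0 where "\<sigma>0 = s0 k"
  have pos: "\<forall>i. 0 < w i \<and> 0 < w i \<and> w i \<le> W"
  proof
    fix i
    have "1 \<le> M" by (simp add: M_def)
    hence "N \<le> M*N" by (metis mult_1 mult_le_mono1)
    hence "N \<le> M*N+1" by linarith
    hence "real N \<le> W" unfolding W_def by (simp only: of_nat_le_iff)
    thus "0 < w i \<and> 0 < w i \<and> w i \<le> W" by (simp add: w_def wI_def N_def W_def)
  qed
  have ord: "is_ordering n \<sigma>0" using s0_ord[of k] by (simp add: n_def M_def N_def \<sigma>0_def)
  have BLh: "BL_height W n w w \<sigma> = packing_height n w y"
    if "is_ordering n \<sigma>" "is_BL_packing W w w \<sigma> x y" for \<sigma> x y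
    using BL_height_eq that by blast
  obtain x0 y0 where B0: "is_BL_packing W w w \<sigma>0 x0 y0"
    using BL_exists[of \<sigma>0 w w W] ord pos by (auto simp: is_ordering_def)
  have kp0: "k_perm n k \<sigma>0 \<sigma>0" using ord by (simp add: k_perm_def)
  have lowk: "2 * real N \<le> BL_height W n w w \<sigma>" if kp: "k_perm n k \<sigma>0 \<sigma>" for \<sigma>
  proof -
    have o: "is_ordering n \<sigma>" using kp by (simp add: k_perm_def)
    obtain x y where B: "is_BL_packing W w w \<sigma> x y"
      using BL_exists[of \<sigma> w w W] o pos by (auto simp: is_ordering_def)
    have "2 * real N \<le> packing_height n w y"
      using lower_k[of k \<sigma> x y] kp B unfolding n_def M_def N_def \<sigma>0_def W_def w_def by simp
    thus ?thesis using BLh[OF o B] by simp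
  qed
  have h0: "BL_height W n w w \<sigma>0 = 2 * real N"
  proof -
    have "packing_height n w y0 \<le> 2 * real N"
      using upper_s0[of k x0 y0] B0 unfolding n_def M_def N_def \<sigma>0_def W_def w_def by simp
    thus ?thesis using lowk[OF kp0] BLh[OF ord B0] by simp
  qed
  have lo: "local_optimum W n w w k \<sigma>0"
    unfolding local_optimum_def improvement_step_def using lowk h0 by force
  have only: "\<sigma> = \<sigma>0" if "(improvement_step W n w w k)\<^sup>*\<^sup>* \<sigma>0 \<sigma>" for \<sigma>
    using that
  proof (rule converse_rtranclpE)
    show "\<sigma>0 = \<sigma> \<Longrightarrow> \<sigma> = \<sigma>0" by simp
    fix z assume "improvement_step W n w w k \<sigma>0 z"
    thus "\<sigma> = \<sigma>0" using lo unfolding local_optimum_def by blast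
  qed
  have ho: "h_opt W n w w = real N"
    using hopt[of M N] unfolding W_def n_def w_def M_def N_def by simp
  show ?thesis
  proof (intro exI conjI allI impI)
    show "0 < W" unfolding W_def by (simp only: of_nat_0_less_iff)
    show "0 < n" by (simp add: n_def M_def)
    show "\<And>i. i < n \<Longrightarrow> 0 < w i" "\<And>i. i < n \<Longrightarrow> w i \<le> W" "\<And>i. i < n \<Longrightarrow> w i = w i"
      using pos by auto
    show "is_ordering n \<sigma>0" by (rule ord)
    show "(improvement_step W n w w k)\<^sup>*\<^sup>* \<sigma>0 \<sigma>0" by simp
    show "local_optimum W n w w k \<sigma>0" by (rule lo)
  next
    fix \<sigma> assume "(improvement_step W n w w k)\<^sup>*\<^sup>* \<sigma>0 \<sigma> \<and> local_optimum W n w w k \<sigma>"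
    hence "\<sigma> = \<sigma>0" using only by blast
    thus "BL_height W n w w \<sigma> = 2 * h_opt W n w w" using h0 ho by simp
  qed
qed

end
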